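(* The formal power series $\mathcal{E}_1(x)=\sum_{n=1}^{\infty}e(n)x^n\in\mathbb{Z}[[x]]$ satisfies $$\mathcal{E}_1(x)=\mathcal{E}_1(x^2)+\frac{x^2+1}{x}\,\mathcal{E}_1(x^4)+\frac{x^2}{1-x}.$$
   Context: The Stern polynomials $B_n(t)\in\mathbb{Z}[t]$ are defined by $B_0(t)=0$, $B_1(t)=1$, and for $n\geq 1$: $B_{2n}(t)=tB_n(t)$, $B_{2n+1}(t)=B_n(t)+B_{n+1}(t)$. For $n\geq1$ let $e(n)=\deg B_n(t)$. *)

theory Defs
  imports "HOL-Computational_Algebra.Computational_Algebra"
begin

function stern_poly :: "nat \<Rightarrow> int poly" where
  "stern_poly n =
     (if n = 0 then 0
      else if n = 1 then 1
      else if even n then [:0, 1:] * stern_poly (n div 2)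
      else stern_poly (n div 2) + stern_poly (n div 2 + 1))"
  by auto
termination
  by (relation "measure id") (auto elim!: oddE)

declare stern_poly.simps [simp del]

text \<open>e(n) = deg B_n(t), used for n >= 1.\<close>
definition e :: "nat \<Rightarrow> nat" where
  "e n = degree (stern_poly n)"

text \<open>E_1(x) = sum_{n>=1} e(n) x^n, viewed in Q[[x]] (coefficients are integers).\<close>
definition E1 :: "rat fps" where
  "E1 = Abs_fps (\<lambda>n. if n = 0 then 0 else of_nat (e n))"

end

theory Submission
  imports Defs
begin

lemma sp0: "stern_poly 0 = 0" by (simp add: stern_poly.simps)
lemma sp1: "stern_poly (Suc 0) = 1" by (simp add: stern_poly.simps)
lemma spE: "n \<ge> 1 \<Longrightarrow> stern_poly (2*n) = pCons 0 (stern_poly n)"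
  by (subst stern_poly.simps) simp
lemma spO: "n \<ge> 1 \<Longrightarrow> stern_poly (Suc (2*n)) = stern_poly n + stern_poly (Suc n)"
  by (subst stern_poly.simps) simp

lemma sp_pos: "n \<ge> 1 \<Longrightarrow> stern_poly n \<noteq> 0 \<and> (\<forall>i. coeff (stern_poly n) i \<ge> 0)"
proof (induction n rule: less_induct)
  case (less n)
  show ?case
  proof (cases "n = 1")
    case True thus ?thesis by (simp add: sp1)
  next
    case False
    obtain k where k: "n = 2*k \<or> n = 2*k+1" by (metis oddE evenE)
    then show ?thesis
    proof
      assume n: "n = 2*k"
      hence "k \<ge> 1" "k < n" using less.prems by auto
      with less.IH[of k] show ?thesis using n by (auto simp: spE coeff_pCons split: nat.splits)
    next
      assume n: "n = 2*k+1"
      hence "k \<ge> 1" "k < n" "k+1 < n" using less.prems False by auto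
      with less.IH[of k] less.IH[of "k+1"] have
        a: "stern_poly k \<noteq> 0" "\<forall>i. coeff (stern_poly k) i \<ge> 0"
        and b: "stern_poly (k+1) \<noteq> 0" "\<forall>i. coeff (stern_poly (k+1)) i \<ge> 0" by auto
      have "coeff (stern_poly k + stern_poly (k+1)) (degree (stern_poly k)) > 0"
        using a b leading_coeff_neq_0[of "stern_poly k"]
        by (metis add_pos_nonneg coeff_add order_le_neq_trans)
      hence "stern_poly k + stern_poly (k+1) \<noteq> 0" by (metis coeff_0 less_irrefl)
      thus ?thesis using n a b `k \<ge> 1` by (auto simp: spO)
    qed
  qed
qed

lemma deg_add_nonneg:
  fixes p q :: "int poly"
  assumes "p \<noteq> 0" "q \<noteq> 0" "\<forall>i. coeff p i \<ge> 0" "\<forall>i. coeff q i \<ge> 0"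
  shows "degree (p + q) = max (degree p) (degree q)"
proof -
  have "degree (p+q) \<ge> degree p"
  proof (rule le_degree)
    have "coeff p (degree p) > 0" using assms leading_coeff_neq_0[of p]
      by (metis order_le_neq_trans)
    thus "coeff (p+q) (degree p) \<noteq> 0" using assms(4) by (metis add_pos_nonneg coeff_add less_irrefl)
  qed
  moreover have "degree (p+q) \<ge> degree q"
  proof (rule le_degree)
    have "coeff q (degree q) > 0" using assms leading_coeff_neq_0[of q]
      by (metis order_le_neq_trans)
    thus "coeff (p+q) (degree q) \<noteq> 0" using assms(3) by (metis add_nonneg_pos coeff_add less_irrefl)
  qed
  ultimately show ?thesis using degree_add_le_max[of p q] by simp
qed

lemma eE: "n \<ge> 1 \<Longrightarrow> e (2*n) = e n + 1"
  using sp_pos[of n] by (simp add: e_def spE)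
lemma eO: "n \<ge> 1 \<Longrightarrow> e (2*n+1) = max (e n) (e (n+1))"
  using sp_pos[of n] sp_pos[of "n+1"] by (simp add: e_def spO deg_add_nonneg)
lemma e1: "e (Suc 0) = 0" by (simp add: e_def sp1)

lemma e_diff: "n \<ge> 1 \<Longrightarrow> e (n+1) \<le> e n + 1 \<and> e n \<le> e (n+1) + 1"
proof (induction n rule: less_induct)
  case (less n)
  obtain k where k: "n = 2*k \<or> n = 2*k+1" by (metis oddE evenE)
  then show ?case
  proof
    assume n: "n = 2*k"
    hence "k \<ge> 1" "k < n" using less.prems by auto
    with less.IH[of k] show ?thesis using n eE[of k] eO[of k] by auto
  next
    assume n: "n = 2*k+1"
    show ?thesis
    proof (cases "k = 0")
      case True thus ?thesis using n e1 eE[of 1] by (simp add: numeral_eq_Suc)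
    next
      case False
      hence "k \<ge> 1" "k < n" using n by auto
      with less.IH[of k] show ?thesis using n eE[of "k+1"] eO[of k]
        by (auto simp: algebra_simps)
    qed
  qed
qed

lemma e4a: "k \<ge> 1 \<Longrightarrow> e (4*k+1) = e k + 1"
  using eO[of "2*k"] eE[of k] eO[of k] e_diff[of k] by (auto simp: mult.assoc)
lemma e4b: "e (4*k+3) = e (k+1) + 1"
proof (cases "k = 0")
  case True thus ?thesis using eO[of 1] e1 eE[of 1] by (simp add: numeral_eq_Suc)
next
  case False
  have "4*k+3 = 2*(2*k+1)+1" "2*(k+1) = 2*k+2" "2*(k+1) = 2*k+1+1" by auto
  have "e (4*k+3) = e (Suc (2*(2*k+1)))" by (simp add: algebra_simps numeral_eq_Suc)
  thus ?thesis using False eO[of "2*k+1"] eE[of "k+1"] eO[of k] e_diff[of k]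
    by (auto simp: algebra_simps)
qed

lemma compose_Xk:
  fixes a :: "rat fps"
  assumes k: "k > 0"
  shows "(a oo fps_X^k) $ n = (if k dvd n then a $ (n div k) else 0)"
proof -
  have "(a oo fps_X^k) $ n = (\<Sum>i\<in>{0..n}. a$i * (if n = k*i then 1 else 0))"
    by (simp add: fps_compose_nth power_mult[symmetric])
  also have "\<dots> = (\<Sum>i\<in>{0..n}. if i = n div k \<and> k dvd n then a$i else 0)"
    using k by (intro sum.cong) auto
  also have "\<dots> = (if k dvd n then a $ (n div k) else 0)"
    using k by (cases "k dvd n") (auto simp: sum.delta' div_le_dividend)
  finally show ?thesis .
qed

lemma inv_gp: "inverse (1 - fps_X) = Abs_fps (\<lambda>n. 1::rat)"
  proof -
  have "inverse (inverse (Abs_fps (\<lambda>n. 1::rat))) = Abs_fps (\<lambda>n. 1::rat)"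
    by (rule fps_inverse_idempotent) simp
  thus ?thesis by (simp add: fps_inverse_gp')
qed

lemma E1_nth: "E1 $ n = (if n = 0 then 0 else of_nat (e n))"
  by (simp add: E1_def)

theorem mainTheorem17:
  shows "E1 = (E1 oo fps_X ^ 2)
             + (fps_X ^ 2 + 1) * ((E1 oo fps_X ^ 4) / fps_X)
             + fps_X ^ 2 / (1 - fps_X)"
proof (rule fps_ext)
  fix m
  define S where "S j = (if 4 dvd (j+1) then E1 $ ((j+1) div 4) else 0)" for j
  have d: "fps_X ^ 2 / (1 - fps_X) = fps_X^2 * Abs_fps (\<lambda>n. 1::rat)"
    by (simp add: fps_divide_unit inv_gp)
  have r: "((E1 oo fps_X ^ 2)
             + (fps_X ^ 2 + 1) * ((E1 oo fps_X ^ 4) / fps_X)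
             + fps_X ^ 2 / (1 - fps_X)) $ m =
     (if even m then E1 $ (m div 2) else 0) + (if m < 2 then 0 else S (m-2)) + S m
       + (if m < 2 then 0 else 1)"
    unfolding d by (simp add: distrib_right fps_X_power_mult_nth compose_Xk S_def)
  define k where "k = m div 4"
  have k: "m = 4*k \<or> m = 4*k+1 \<or> m = 4*k+2 \<or> m = 4*k+3" unfolding k_def by presburger
  have "E1 $ m = (if even m then E1 $ (m div 2) else 0) + (if m < 2 then 0 else S (m-2)) + S m
       + (if m < 2 then 0 else 1)"
  proof -
    { assume m: "m = 4*k"
      have ?thesis
      proof (cases "k = 0")
        case False
        hence "4*k = 2*(2*k)" "2*k \<ge> 1" "\<not> 4 dvd Suc (4*k)" "\<not> 4 dvd Suc (4*k-2)" by presburger+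
        thus ?thesis using m False eE[of "2*k"] by (auto simp: E1_nth S_def)
      qed (simp add: m E1_nth S_def) }
    moreover
    { assume m: "m = 4*k+2"
      have "4*k+2 = 2*(2*k+1)" "\<not> 4 dvd Suc (4*k)" "\<not> 4 dvd Suc (Suc (Suc (4*k)))" by presburger+
      hence ?thesis using m eE[of "2*k+1"] by (auto simp: E1_nth S_def) }
    moreover
    { assume m: "m = 4*k+1"
      have ?thesis
      proof (cases "k = 0")
        case False
        have "4*k+1-2+1 = 4*k" "\<not> 4 dvd Suc (Suc (4*k))" using False by presburger+
        thus ?thesis using m False e4a[of k] by (auto simp: E1_nth S_def)
      qed (simp add: m E1_nth S_def e1) }
    moreover
    { assume m: "m = 4*k+3"
      have "4*k+3-2+1 = 4*k+2" "4*k+3+1 = 4*(k+1)" "\<not> 4 dvd Suc (Suc (4*k))" by presburger+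
      hence ?thesis using m e4b[of k] by (auto simp: E1_nth S_def) }
    ultimately show ?thesis using k by blast
  qed
  with r show "E1 $ m = ((E1 oo fps_X ^ 2)
             + (fps_X ^ 2 + 1) * ((E1 oo fps_X ^ 4) / fps_X)
             + fps_X ^ 2 / (1 - fps_X)) $ m" by simp
qed

end
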